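(* Let $F,K\ge1$ and $0\le Z<F$ be integers such that $\frac{K(F-Z)}{Z+1}$ is an integer, and suppose an RPDA$(F,K,Z)$ exists. Then for every integer $x$ with $0\le x<\frac{Z+1}{F-Z}$ and $x<K$, an RPDA$(F,K-x,Z)$ exists.
   Context: A placement delivery array $S$-PDA$(F,K,Z)$ is an $F\times K$ array $R=(r_{j,k})$, $1\le j\le F$, $1\le k\le K$, over a finite set $S$ such that: (1) each cell is either empty or contains an element of $S$; (2) each column contains exactly $Z$ empty cells; (3) each element of $S$ occurs at most once in each row and at most once in each column; (4) if two distinct nonempty cells satisfy $r_{j_1,k_1}=r_{j_2,k_2}=t\in S$, then the cells $r_{j_1,k_2}$ and $r_{j_2,k_1}$ are empty. An RPDA$(F,K,Z)$ (restricted PDA) is an $S$-PDA$(F,K,Z)$ with $|S|=\left\lceil\frac{K(F-Z)}{Z+1}\right\rceil$. *)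

theory Defs
  imports Complex_Main
begin

text \<open>An F x K array over S: rows indexed by 0..<F, columns by 0..<K;
  None = empty cell, Some s = cell containing s.\<close>

definition is_PDA :: "'a set \<Rightarrow> nat \<Rightarrow> nat \<Rightarrow> nat \<Rightarrow> (nat \<Rightarrow> nat \<Rightarrow> 'a option) \<Rightarrow> bool" where
  "is_PDA S F K Z R \<longleftrightarrow>
     finite S \<and>
     (\<forall>j<F. \<forall>k<K. \<forall>s. R j k = Some s \<longrightarrow> s \<in> S) \<and>
     (\<forall>k<K. card {j. j < F \<and> R j k = None} = Z) \<and>
     (\<forall>s\<in>S. \<forall>j<F. \<forall>k1<K. \<forall>k2<K. R j k1 = Some s \<and> R j k2 = Some s \<longrightarrow> k1 = k2) \<and>
     (\<forall>s\<in>S. \<forall>k<K. \<forall>j1<F. \<forall>j2<F. R j1 k = Some s \<and> R j2 k = Some s \<longrightarrow> j1 = j2) \<and>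
     (\<forall>s\<in>S. \<forall>j1<F. \<forall>j2<F. \<forall>k1<K. \<forall>k2<K.
        R j1 k1 = Some s \<and> R j2 k2 = Some s \<and> (j1, k1) \<noteq> (j2, k2) \<longrightarrow>
        R j1 k2 = None \<and> R j2 k1 = None)"

definition is_RPDA :: "'a set \<Rightarrow> nat \<Rightarrow> nat \<Rightarrow> nat \<Rightarrow> (nat \<Rightarrow> nat \<Rightarrow> 'a option) \<Rightarrow> bool" where
  "is_RPDA S F K Z R \<longleftrightarrow> is_PDA S F K Z R \<and>
     int (card S) = ceiling ((real K * (real F - real Z)) / (real Z + 1))"

definition RPDA_exists :: "nat \<Rightarrow> nat \<Rightarrow> nat \<Rightarrow> bool" where
  "RPDA_exists F K Z \<longleftrightarrow> (\<exists>(S :: nat set) R. is_RPDA S F K Z R)"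

end

theory Submission
  imports Defs
begin

lemma PDA_mono:
  assumes "is_PDA S F K Z R" "K' \<le> K"
  shows "is_PDA S F K' Z R"
proof -
  have h: "\<And>k. k < K' \<Longrightarrow> k < K" using assms(2) by simp
  show ?thesis using assms(1) unfolding is_PDA_def
    by (meson h)
qed

theorem mainTheorem8:
  fixes F K Z :: nat
  assumes "F \<ge> 1" and "K \<ge> 1" and "Z < F"
    and "(Z + 1) dvd (K * (F - Z))"
    and "RPDA_exists F K Z"
  shows "\<forall>x::nat. real x < (real Z + 1) / (real F - real Z) \<and> x < K
           \<longrightarrow> RPDA_exists F (K - x) Z"
proof (intro allI impI)
  fix x :: nat
  assume hx: "real x < (real Z + 1) / (real F - real Z) \<and> x < K"
  obtain S :: "nat set" and R where SR: "is_RPDA S F K Z R"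
    using assms(5) unfolding RPDA_exists_def by blast
  obtain N where N: "K * (F - Z) = (Z + 1) * N" using assms(4) by blast
  define d where "d = F - Z"
  have dpos: "real d > 0" using assms(3) d_def by simp
  have rd: "real F - real Z = real d" using assms(3) d_def by simp
  have KN: "real K * real d = (real Z + 1) * real N"
    using N d_def by (metis of_nat_1 of_nat_add of_nat_mult)
  have e1: "real K * (real F - real Z) / (real Z + 1) = real N"
    using KN rd by (simp add: field_simps)
  have cS: "int (card S) = int N" using SR e1 unfolding is_RPDA_def by simp
  have xd: "real x * real d < real Z + 1"
    using hx rd dpos by (simp add: pos_less_divide_eq)
  have eq2: "real (K - x) * (real F - real Z) / (real Z + 1)
        = real N - real x * real d / (real Z + 1)"
    using hx KN rd by (simp add: of_nat_diff field_simps)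
  have b1: "real x * real d / (real Z + 1) < 1" using xd by simp
  have b2: "real x * real d / (real Z + 1) \<ge> 0" using dpos by simp
  have "ceiling (real (K - x) * (real F - real Z) / (real Z + 1)) = int N"
    unfolding eq2 using b1 b2 by (simp add: ceiling_eq_iff)
  hence "is_RPDA S F (K - x) Z R"
    using SR cS PDA_mono[of S F K Z R "K - x"] unfolding is_RPDA_def by simp
  thus "RPDA_exists F (K - x) Z" unfolding RPDA_exists_def by blast
qed

end
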